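(* Let $H$ be a complex Hilbert space and let $\Delta:K(H)\to K(H)$ be a weak-2-local derivation. Let $(p_n)$ be a sequence of mutually orthogonal minimal projections in $K(H)$, and let $\mathcal{B}$ be the commutative C$^*$-subalgebra of $K(H)$ generated by the $p_n$'s. Then $\Delta(a+b)=\Delta(a)+\Delta(b)$ for all $a,b\in\mathcal{B}$.
   Context: $K(H)$ is the C$^*$-algebra of compact operators on $H$. A derivation on a C$^*$-algebra $A$ is a linear map $D:A\to A$ with $D(ab)=D(a)b+aD(b)$. A (not necessarily linear) map $\Delta:A\to A$ is a weak-2-local derivation if for every $a,b\in A$ and every $\phi\in A^*$ there exists a derivation $D_{a,b,\phi}:A\to A$ such that $\phi\Delta(a)=\phi D_{a,b,\phi}(a)$ and $\phi\Delta(b)=\phi D_{a,b,\phi}(b)$. *)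

theory Defs
  imports "HOL-Analysis.Analysis"
begin

text \<open>The library has only real inner product spaces, so we introduce complex ones.
  The inner product is conjugate-linear in the first argument, linear in the second.\<close>

class complex_inner = real_normed_vector +
  fixes scaleC :: "complex \<Rightarrow> 'a \<Rightarrow> 'a" (infixr "*\<^sub>C" 75)
  fixes cinner :: "'a \<Rightarrow> 'a \<Rightarrow> complex"
  assumes scaleC_add_right: "a *\<^sub>C (x + y) = a *\<^sub>C x + a *\<^sub>C y"
  and scaleC_add_left: "(a + b) *\<^sub>C x = a *\<^sub>C x + b *\<^sub>C x"
  and scaleC_scaleC: "a *\<^sub>C (b *\<^sub>C x) = (a * b) *\<^sub>C x"
  and scaleC_one: "1 *\<^sub>C x = x"
  and scaleR_scaleC: "scaleR r x = complex_of_real r *\<^sub>C x"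
  and cinner_add_left: "cinner (x + y) z = cinner x z + cinner y z"
  and cinner_scaleC_left: "cinner (a *\<^sub>C x) y = cnj a * cinner x y"
  and cinner_commute: "cinner y x = cnj (cinner x y)"
  and cinner_norm: "cinner x x = complex_of_real ((norm x)\<^sup>2)"

class chilbert_space = complex_inner + complete_space

definition bounded_clinear :: "('a::complex_inner \<Rightarrow> 'b::complex_inner) \<Rightarrow> bool" where
  "bounded_clinear f \<longleftrightarrow> bounded_linear f \<and> (\<forall>c x. f (c *\<^sub>C x) = c *\<^sub>C f x)"

definition compact_ops :: "('h::chilbert_space \<Rightarrow> 'h) set" where
  "compact_ops = {T. bounded_clinear T \<and> compact (closure (T ` cball 0 1))}"

definition op_scale :: "complex \<Rightarrow> ('h::complex_inner \<Rightarrow> 'h) \<Rightarrow> ('h \<Rightarrow> 'h)" where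
  "op_scale c T = (\<lambda>x. c *\<^sub>C T x)"

definition op_add :: "('h::complex_inner \<Rightarrow> 'h) \<Rightarrow> ('h \<Rightarrow> 'h) \<Rightarrow> ('h \<Rightarrow> 'h)" where
  "op_add S T = (\<lambda>x. S x + T x)"

definition is_adjoint :: "('h::complex_inner \<Rightarrow> 'h) \<Rightarrow> ('h \<Rightarrow> 'h) \<Rightarrow> bool" where
  "is_adjoint T S \<longleftrightarrow> (\<forall>x y. cinner (T x) y = cinner x (S y))"

definition is_projection :: "('h::complex_inner \<Rightarrow> 'h) \<Rightarrow> bool" where
  "is_projection p \<longleftrightarrow> bounded_clinear p \<and> p \<circ> p = p \<and> is_adjoint p p"

text \<open>Minimal projection of K(H): a nonzero projection in K(H) with no projection of K(H)
  strictly between 0 and it (q \<le> p for projections means q = q p).\<close>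
definition minimal_projection :: "('h::chilbert_space \<Rightarrow> 'h) \<Rightarrow> bool" where
  "minimal_projection p \<longleftrightarrow> p \<in> compact_ops \<and> is_projection p \<and> p \<noteq> (\<lambda>x. 0) \<and>
     (\<forall>q \<in> compact_ops. is_projection q \<and> q \<circ> p = q \<longrightarrow> q = (\<lambda>x. 0) \<or> q = p)"

definition cstar_subalgebra :: "('h::chilbert_space \<Rightarrow> 'h) set \<Rightarrow> bool" where
  "cstar_subalgebra A \<longleftrightarrow> A \<subseteq> compact_ops \<and> (\<lambda>x. 0) \<in> A \<and>
     (\<forall>S\<in>A. \<forall>T\<in>A. op_add S T \<in> A) \<and>
     (\<forall>c. \<forall>T\<in>A. op_scale c T \<in> A) \<and>
     (\<forall>S\<in>A. \<forall>T\<in>A. S \<circ> T \<in> A) \<and>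
     (\<forall>T\<in>A. \<exists>S\<in>A. is_adjoint T S) \<and>
     (\<forall>f T. (\<forall>n. f n \<in> A) \<and> bounded_clinear T \<and>
        (\<lambda>n. onorm (\<lambda>x. f n x - T x)) \<longlonglongrightarrow> 0 \<longrightarrow> T \<in> A)"

definition generated_cstar :: "('h::chilbert_space \<Rightarrow> 'h) set \<Rightarrow> ('h \<Rightarrow> 'h) set" where
  "generated_cstar S = \<Inter>{A. cstar_subalgebra A \<and> S \<subseteq> A}"

definition derivation_K :: "(('h::chilbert_space \<Rightarrow> 'h) \<Rightarrow> ('h \<Rightarrow> 'h)) \<Rightarrow> bool" where
  "derivation_K D \<longleftrightarrow> (\<forall>a\<in>compact_ops. D a \<in> compact_ops) \<and>
     (\<forall>a\<in>compact_ops. \<forall>b\<in>compact_ops. D (op_add a b) = op_add (D a) (D b)) \<and>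
     (\<forall>c. \<forall>a\<in>compact_ops. D (op_scale c a) = op_scale c (D a)) \<and>
     (\<forall>a\<in>compact_ops. \<forall>b\<in>compact_ops. D (a \<circ> b) = op_add (D a \<circ> b) (a \<circ> D b))"

definition dual_K :: "(('h::chilbert_space \<Rightarrow> 'h) \<Rightarrow> complex) \<Rightarrow> bool" where
  "dual_K \<phi> \<longleftrightarrow>
     (\<forall>a\<in>compact_ops. \<forall>b\<in>compact_ops. \<phi> (op_add a b) = \<phi> a + \<phi> b) \<and>
     (\<forall>c. \<forall>a\<in>compact_ops. \<phi> (op_scale c a) = c * \<phi> a) \<and>
     (\<exists>C. \<forall>a\<in>compact_ops. norm (\<phi> a) \<le> C * onorm a)"

definition weak_2_local_derivation_K :: "(('h::chilbert_space \<Rightarrow> 'h) \<Rightarrow> ('h \<Rightarrow> 'h)) \<Rightarrow> bool" where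
  "weak_2_local_derivation_K \<Delta> \<longleftrightarrow> (\<forall>a\<in>compact_ops. \<Delta> a \<in> compact_ops) \<and>
     (\<forall>a\<in>compact_ops. \<forall>b\<in>compact_ops. \<forall>\<phi>. dual_K \<phi> \<longrightarrow>
        (\<exists>D. derivation_K D \<and> \<phi> (\<Delta> a) = \<phi> (D a) \<and> \<phi> (\<Delta> b) = \<phi> (D b)))"

end

theory Submission
  imports Defs
begin



lemma scaleC_zero_left[simp]: "(0::complex) *\<^sub>C (x::'a::complex_inner) = 0"
proof -
  have "scaleR 0 x = complex_of_real 0 *\<^sub>C x" by (rule scaleR_scaleC)
  then show ?thesis by simp
qed

lemma scaleC_minus1: "(-1::complex) *\<^sub>C (x::'a::complex_inner) = - x"
proof -
  have "scaleR (-1) x = complex_of_real (-1) *\<^sub>C x" by (rule scaleR_scaleC)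
  then show ?thesis by simp
qed

lemma scaleC_zero_right[simp]: "(a::complex) *\<^sub>C (0::'a::complex_inner) = 0"
proof -
  have "a *\<^sub>C (0::'a) = a *\<^sub>C ((0::complex) *\<^sub>C (0::'a))" by (simp only: scaleC_zero_left)
  also have "\<dots> = 0" by (subst scaleC_scaleC) simp
  finally show ?thesis .
qed

lemma scaleC_minus_right: "(a::complex) *\<^sub>C (- x::'a::complex_inner) = - (a *\<^sub>C x)"
proof -
  have "a *\<^sub>C (- x) = a *\<^sub>C ((-1) *\<^sub>C x)" by (simp only: scaleC_minus1)
  also have "\<dots> = (-1) *\<^sub>C (a *\<^sub>C x)" by (simp only: scaleC_scaleC mult.commute)
  finally show ?thesis by (simp only: scaleC_minus1)
qed

lemma mult_cnj_cmod: "z * cnj z = complex_of_real ((cmod z)\<^sup>2)"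
  by (simp add: complex_mult_cnj cmod_power2)

lemma cnj_mult_cmod: "cnj z * z = complex_of_real ((cmod z)\<^sup>2)"
  by (simp add: mult.commute mult_cnj_cmod)

lemma scaleC_diff_right: "(a::complex) *\<^sub>C (x - y::'a::complex_inner) = a *\<^sub>C x - a *\<^sub>C y"
  by (simp only: diff_conv_add_uminus scaleC_add_right scaleC_minus_right)

lemma scaleC_minus_left: "(- a::complex) *\<^sub>C (x::'a::complex_inner) = - (a *\<^sub>C x)"
proof -
  have "(- a) *\<^sub>C x = (-1) *\<^sub>C (a *\<^sub>C x)" by (simp only: scaleC_scaleC) simp
  then show ?thesis by (simp only: scaleC_minus1)
qed

lemma scaleC_diff_left: "(a - b::complex) *\<^sub>C (x::'a::complex_inner) = a *\<^sub>C x - b *\<^sub>C x"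
  by (simp only: diff_conv_add_uminus scaleC_add_left scaleC_minus_left)

lemma cinner_add_right: "cinner (x::'a::complex_inner) (y + z) = cinner x y + cinner x z"
proof -
  have "cinner x (y + z) = cnj (cinner (y+z) x)" by (rule cinner_commute)
  also have "\<dots> = cnj (cinner y x) + cnj (cinner z x)" by (simp add: cinner_add_left)
  finally show ?thesis by (simp add: cinner_commute[of x y] cinner_commute[of x z])
qed

lemma cinner_scaleC_right: "cinner (x::'a::complex_inner) (a *\<^sub>C y) = a * cinner x y"
proof -
  have "cinner x (a *\<^sub>C y) = cnj (cinner (a *\<^sub>C y) x)" by (rule cinner_commute)
  also have "\<dots> = a * cnj (cinner y x)" by (simp add: cinner_scaleC_left)
  finally show ?thesis by (simp add: cinner_commute[of x y])
qed

lemma cinner_zero_left[simp]: "cinner (0::'a::complex_inner) y = 0"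
proof -
  have "cinner ((0::complex) *\<^sub>C (0::'a)) y = 0" by (simp only: cinner_scaleC_left) simp
  then show ?thesis by simp
qed

lemma cinner_zero_right[simp]: "cinner (x::'a::complex_inner) 0 = 0"
  by (subst cinner_commute) simp

lemma cinner_minus_right: "cinner (x::'a::complex_inner) (- y) = - cinner x y"
proof -
  have "cinner x ((-1) *\<^sub>C y) = - cinner x y" by (simp only: cinner_scaleC_right) simp
  then show ?thesis by (simp only: scaleC_minus1)
qed

lemma cinner_minus_left: "cinner (- x::'a::complex_inner) y = - cinner x y"
  by (subst cinner_commute) (simp add: cinner_minus_right cinner_commute[of y x])

lemma cinner_diff_right: "cinner (x::'a::complex_inner) (y - z) = cinner x y - cinner x z"
  by (simp only: diff_conv_add_uminus cinner_add_right cinner_minus_right)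

lemma cinner_diff_left: "cinner (x - y::'a::complex_inner) z = cinner x z - cinner y z"
  by (simp only: diff_conv_add_uminus cinner_add_left cinner_minus_left)

lemma cinner_self_eq_0[simp]: "cinner (x::'a::complex_inner) x = 0 \<longleftrightarrow> x = 0"
  by (simp add: cinner_norm)

lemma cinner_ext: "(\<And>y. cinner y (u::'a::complex_inner) = cinner y v) \<Longrightarrow> u = v"
proof -
  assume "\<And>y. cinner y u = cinner y v"
  then have "cinner (u - v) (u - v) = 0" by (simp add: cinner_diff_right)
  then show "u = v" by simp
qed

lemma norm_scaleC: "norm (a *\<^sub>C (x::'a::complex_inner)) = cmod a * norm x"
proof -
  have "complex_of_real ((norm (a *\<^sub>C x))\<^sup>2) = cinner (a *\<^sub>C x) (a *\<^sub>C x)"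
    by (simp add: cinner_norm)
  also have "\<dots> = cnj a * a * cinner x x"
    by (simp add: cinner_scaleC_left cinner_scaleC_right)
  also have "cnj a * a = complex_of_real ((cmod a)\<^sup>2)"
    by (rule cnj_mult_cmod)
  finally have "complex_of_real ((norm (a *\<^sub>C x))\<^sup>2) = complex_of_real (((cmod a) * norm x)\<^sup>2)"
    by (simp add: cinner_norm power_mult_distrib)
  then have "(norm (a *\<^sub>C x))\<^sup>2 = ((cmod a) * norm x)\<^sup>2"
    using of_real_eq_iff by blast
  then show ?thesis by (simp add: power2_eq_iff_nonneg)
qed

lemma Cauchy_Schwarz: "cmod (cinner (x::'a::complex_inner) y) \<le> norm x * norm y"
proof (cases "x = 0")
  case True then show ?thesis by simp
next
  case False
  define c where "c = cinner x y"
  define n where "n = (norm x)\<^sup>2"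
  define t where "t = c / complex_of_real n"
  have xx: "cinner x x = complex_of_real n" unfolding n_def by (rule cinner_norm)
  have nx: "n > 0" using False unfolding n_def by simp
  have yx: "cinner y x = cnj c" unfolding c_def by (rule cinner_commute)
  have "complex_of_real ((norm (y - t *\<^sub>C x))\<^sup>2) = cinner (y - t *\<^sub>C x) (y - t *\<^sub>C x)"
    by (simp add: cinner_norm)
  also have "\<dots> = cinner y y - t * cinner y x - cnj t * cinner x y + cnj t * t * cinner x x"
    by (simp add: cinner_diff_left cinner_diff_right cinner_scaleC_left cinner_scaleC_right algebra_simps)
  also have "\<dots> = cinner y y - c * cnj c / complex_of_real n"
    using nx unfolding t_def yx xx c_def[symmetric] by (simp add: field_simps)
  also have "c * cnj c = complex_of_real ((cmod c)\<^sup>2)" by (rule mult_cnj_cmod)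
  finally have "complex_of_real ((norm (y - t *\<^sub>C x))\<^sup>2) =
      complex_of_real ((norm y)\<^sup>2 - (cmod c)\<^sup>2 / n)"
    by (simp add: cinner_norm[of y])
  then have "(norm (y - t *\<^sub>C x))\<^sup>2 = (norm y)\<^sup>2 - (cmod c)\<^sup>2 / n"
    using of_real_eq_iff by blast
  then have "(cmod c)\<^sup>2 / n \<le> (norm y)\<^sup>2"
    by (metis diff_ge_0_iff_ge zero_le_power2)
  then have "(cmod c)\<^sup>2 \<le> (norm x * norm y)\<^sup>2"
    using nx unfolding n_def by (simp add: divide_le_eq power_mult_distrib mult.commute)
  then show ?thesis unfolding c_def by (simp add: power2_le_iff_abs_le)
qed




lemma bcl_add: "bounded_clinear T \<Longrightarrow> T (x + y) = T x + T y"
  unfolding bounded_clinear_def by (simp add: linear_simps)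
lemma bcl_scaleC: "bounded_clinear T \<Longrightarrow> T (c *\<^sub>C x) = c *\<^sub>C T x"
  unfolding bounded_clinear_def by simp
lemma bcl_bl: "bounded_clinear T \<Longrightarrow> bounded_linear T"
  unfolding bounded_clinear_def by simp
lemma bcl_zero: "bounded_clinear T \<Longrightarrow> T 0 = 0"
  unfolding bounded_clinear_def by (simp add: linear_simps)
lemma bcl_diff: "bounded_clinear T \<Longrightarrow> T (x - y) = T x - T y"
  unfolding bounded_clinear_def by (simp add: linear_simps)
lemma bcl_minus: "bounded_clinear T \<Longrightarrow> T (- x) = - T x"
  unfolding bounded_clinear_def by (simp add: linear_simps)
lemma bcl_onorm: "bounded_clinear T \<Longrightarrow> norm (T x) \<le> onorm T * norm x"
  by (rule onorm[OF bcl_bl])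
lemma bcl_cont: "bounded_clinear T \<Longrightarrow> (f \<longlongrightarrow> l) F \<Longrightarrow> ((\<lambda>k. T (f k)) \<longlongrightarrow> T l) F"
  using bounded_linear.tendsto[OF bcl_bl] by blast

lemma compact_ops_bcl: "T \<in> compact_ops \<Longrightarrow> bounded_clinear T"
  unfolding compact_ops_def by simp

lemma bcl_sum: "bounded_clinear T \<Longrightarrow> T (sum f A) = (\<Sum>i\<in>A. T (f i))"
  unfolding bounded_clinear_def using linear_sum[of T] bounded_linear.linear by blast

lemma cinner_bl_right: "bounded_linear (\<lambda>z. cinner (w::'a::complex_inner) z)"
proof (rule bounded_linear_intro[where K="norm w"])
  fix x y show "cinner w (x + y) = cinner w x + cinner w y" by (rule cinner_add_right)
next
  fix r :: real and x show "cinner w (r *\<^sub>R x) = r *\<^sub>R cinner w x"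
    by (simp add: scaleR_scaleC cinner_scaleC_right scaleR_conv_of_real)
next
  fix x show "norm (cinner w x) \<le> norm x * norm w"
    using Cauchy_Schwarz[of w x] by (simp add: mult.commute)
qed

lemma cinner_bl_left: "bounded_linear (\<lambda>z. cinner z (w::'a::complex_inner))"
proof (rule bounded_linear_intro[where K="norm w"])
  fix x y show "cinner (x + y) w = cinner x w + cinner y w" by (rule cinner_add_left)
next
  fix r :: real and x show "cinner (r *\<^sub>R x) w = r *\<^sub>R cinner x w"
    by (simp add: scaleR_scaleC cinner_scaleC_left scaleR_conv_of_real)
next
  fix x show "norm (cinner x w) \<le> norm x * norm w"
    using Cauchy_Schwarz[of x w] by simp
qed

lemma tendsto_cinner_right: "(f \<longlongrightarrow> l) F \<Longrightarrow> ((\<lambda>k. cinner w (f k)) \<longlongrightarrow> cinner (w::'a::complex_inner) l) F"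
  using bounded_linear.tendsto[OF cinner_bl_right] by blast
lemma tendsto_cinner_left: "(f \<longlongrightarrow> l) F \<Longrightarrow> ((\<lambda>k. cinner (f k) w) \<longlongrightarrow> cinner l (w::'a::complex_inner)) F"
  using bounded_linear.tendsto[OF cinner_bl_left] by blast

lemma compact_closure_sub: "compact K \<Longrightarrow> S \<subseteq> K \<Longrightarrow> compact (closure (S::'a::metric_space set))"
proof -
  assume K: "compact K" and S: "S \<subseteq> K"
  have "closure S \<subseteq> K" using K S by (simp add: closure_minimal compact_imp_closed)
  then have "closure S = closure S \<inter> K" by blast
  then show ?thesis using K by (metis closed_Int_compact closed_closure)
qed

lemma bl_scaleC_left: "bounded_linear (\<lambda>c::complex. c *\<^sub>C (v::'a::complex_inner))"
proof (rule bounded_linear_intro[where K="norm v"])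
  fix x y :: complex show "(x + y) *\<^sub>C v = x *\<^sub>C v + y *\<^sub>C v" by (rule scaleC_add_left)
next
  fix r :: real and x :: complex show "(r *\<^sub>R x) *\<^sub>C v = r *\<^sub>R (x *\<^sub>C v)"
    by (simp add: scaleR_scaleC scaleC_scaleC scaleR_conv_of_real)
next
  fix x :: complex show "norm (x *\<^sub>C v) \<le> norm x * norm v" by (simp add: norm_scaleC)
qed

lemma rank1_bcl: "bounded_clinear (\<lambda>z. cinner u z *\<^sub>C (v::'a::complex_inner))"
proof -
  have bl: "bounded_linear (\<lambda>z. cinner u z *\<^sub>C v)"
    using bounded_linear_compose[OF bl_scaleC_left[of v] cinner_bl_right[of u]] by simp
  show ?thesis unfolding bounded_clinear_def
    using bl by (simp add: cinner_scaleC_right scaleC_scaleC)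
qed

lemma rank1_compact: "(\<lambda>z. cinner u z *\<^sub>C (v::'h::chilbert_space)) \<in> compact_ops"
proof -
  let ?K = "(\<lambda>c. c *\<^sub>C v) ` cball 0 (norm u)"
  have K: "compact ?K"
    by (rule compact_continuous_image[OF linear_continuous_on[OF bl_scaleC_left]]) simp
  have "(\<lambda>z. cinner u z *\<^sub>C v) ` cball 0 1 \<subseteq> ?K"
  proof
    fix w assume "w \<in> (\<lambda>z. cinner u z *\<^sub>C v) ` cball 0 1"
    then obtain z where z: "norm z \<le> 1" "w = cinner u z *\<^sub>C v" by auto
    have "cmod (cinner u z) \<le> norm u * norm z" by (rule Cauchy_Schwarz)
    also have "\<dots> \<le> norm u" using z(1) by (simp add: mult_left_le)
    finally show "w \<in> ?K" using z(2) by auto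
  qed
  then show ?thesis unfolding compact_ops_def using rank1_bcl compact_closure_sub[OF K] by blast
qed

lemma zero_compact: "(\<lambda>x. 0::'h::chilbert_space) \<in> compact_ops"
  using rank1_compact[of "0::'h" "0::'h"] by simp

lemma op_add_compact: "S \<in> compact_ops \<Longrightarrow> T \<in> compact_ops \<Longrightarrow> op_add S T \<in> compact_ops"
proof -
  assume S: "S \<in> compact_ops" and T: "T \<in> compact_ops"
  let ?K = "{x + y | x y. x \<in> closure (S ` cball 0 1) \<and> y \<in> closure (T ` cball 0 1)}"
  have K: "compact ?K" using S T unfolding compact_ops_def by (intro compact_sums) auto
  have sub: "op_add S T ` cball 0 1 \<subseteq> ?K"
  proof
    fix w assume "w \<in> op_add S T ` cball 0 1"
    then obtain z where z: "z \<in> cball 0 1" "w = S z + T z" unfolding op_add_def by auto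
    have "S z \<in> closure (S ` cball 0 1)" using z(1) closure_subset by (meson imageI subsetD)
    moreover have "T z \<in> closure (T ` cball 0 1)" using z(1) closure_subset by (meson imageI subsetD)
    ultimately show "w \<in> ?K" using z(2) by blast
  qed
  have bS: "bounded_clinear S" and bT: "bounded_clinear T"
    using compact_ops_bcl[OF S] compact_ops_bcl[OF T] by auto
  have "bounded_linear (\<lambda>x. S x + T x)"
    by (rule bounded_linear_add[OF bcl_bl[OF bS] bcl_bl[OF bT]])
  moreover have "\<forall>c x. S (c *\<^sub>C x) + T (c *\<^sub>C x) = c *\<^sub>C (S x + T x)"
    using bS bT by (simp add: bcl_scaleC scaleC_add_right)
  ultimately have "bounded_clinear (op_add S T)" unfolding bounded_clinear_def op_add_def by simp
  then show ?thesis unfolding compact_ops_def using compact_closure_sub[OF K sub] by blast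
qed

lemma comp_compact: "bounded_clinear S \<Longrightarrow> T \<in> compact_ops \<Longrightarrow> S \<circ> T \<in> compact_ops"
proof -
  assume S: "bounded_clinear S" and T: "T \<in> compact_ops"
  let ?K = "S ` closure (T ` cball 0 1)"
  have K: "compact ?K" using T unfolding compact_ops_def
    by (intro compact_continuous_image linear_continuous_on bcl_bl S) auto
  have sub: "(S \<circ> T) ` cball 0 1 \<subseteq> ?K"
  proof
    fix w assume "w \<in> (S \<circ> T) ` cball 0 1"
    then obtain z where z: "z \<in> cball 0 1" "w = S (T z)" by auto
    have "T z \<in> closure (T ` cball 0 1)" using z(1) closure_subset by (meson imageI subsetD)
    then show "w \<in> ?K" using z(2) by blast
  qed
  have "bounded_clinear (S \<circ> T)"
    using S compact_ops_bcl[OF T] bounded_linear_compose[of S T] unfolding bounded_clinear_def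
    by (auto simp: o_def)
  then show ?thesis unfolding compact_ops_def using compact_closure_sub[OF K sub] by blast
qed

lemma scaleC_bcl: "bounded_clinear (\<lambda>x. c *\<^sub>C (x::'a::complex_inner))"
proof -
  have "bounded_linear (\<lambda>x. c *\<^sub>C (x::'a))"
  proof (rule bounded_linear_intro[where K="cmod c"])
    fix x y :: 'a show "c *\<^sub>C (x + y) = c *\<^sub>C x + c *\<^sub>C y" by (rule scaleC_add_right)
  next
    fix r :: real and x :: 'a show "c *\<^sub>C (r *\<^sub>R x) = r *\<^sub>R (c *\<^sub>C x)"
      by (simp add: scaleR_scaleC scaleC_scaleC mult.commute)
  next
    fix x :: 'a show "norm (c *\<^sub>C x) \<le> norm x * cmod c" by (simp add: norm_scaleC mult.commute)
  qed
  then show ?thesis unfolding bounded_clinear_def by (simp add: scaleC_scaleC mult.commute)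
qed

lemma op_scale_compact: "T \<in> compact_ops \<Longrightarrow> op_scale c T \<in> compact_ops"
proof -
  assume T: "T \<in> compact_ops"
  have "op_scale c T = (\<lambda>x. c *\<^sub>C x) \<circ> T" unfolding op_scale_def by auto
  then show ?thesis using comp_compact[OF scaleC_bcl T] by simp
qed




lemma scaleC_eq_0_iff: "c *\<^sub>C (x::'a::complex_inner) = 0 \<longleftrightarrow> c = 0 \<or> x = 0"
proof -
  have "norm (c *\<^sub>C x) = cmod c * norm x" by (rule norm_scaleC)
  then show ?thesis by (metis mult_eq_0_iff norm_eq_zero scaleC_zero_left scaleC_zero_right)
qed

lemma cinner_unit: "norm (e::'a::complex_inner) = 1 \<Longrightarrow> cinner e e = 1"
  by (simp add: cinner_norm)

lemma minproj_rank1: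
  fixes p :: "'h::chilbert_space \<Rightarrow> 'h"
  assumes "minimal_projection p"
  shows "\<exists>e. norm e = 1 \<and> p = (\<lambda>z. cinner e z *\<^sub>C e)"
proof -
  have pc: "p \<in> compact_ops" and pp: "is_projection p" and pn: "p \<noteq> (\<lambda>x. 0)"
    and minp: "\<And>q. q \<in> compact_ops \<Longrightarrow> is_projection q \<Longrightarrow> q \<circ> p = q \<Longrightarrow> q = (\<lambda>x. 0) \<or> q = p"
    using assms unfolding minimal_projection_def by auto
  have bp: "bounded_clinear p" and ppp: "p \<circ> p = p" and adp: "is_adjoint p p"
    using pp unfolding is_projection_def by auto
  obtain z where z: "p z \<noteq> 0" using pn by auto
  define e where "e = complex_of_real (1 / norm (p z)) *\<^sub>C p z"
  have ne: "norm e = 1" unfolding e_def using z by (simp add: norm_scaleC norm_divide)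
  have "p (p z) = p z" using ppp by (metis comp_apply)
  then have pe: "p e = e" unfolding e_def by (simp add: bcl_scaleC[OF bp])
  define q where "q = (\<lambda>z. cinner e z *\<^sub>C e)"
  have qc: "q \<in> compact_ops" unfolding q_def by (rule rank1_compact)
  have ee: "cinner e e = 1" using ne by (rule cinner_unit)
  have "q \<circ> q = q" unfolding q_def
    by (rule ext) (simp add: cinner_scaleC_right ee)
  moreover have "is_adjoint q q" unfolding is_adjoint_def q_def
    by (simp add: cinner_scaleC_right cinner_scaleC_left cinner_commute[of _ e] mult.commute)
  ultimately have qp: "is_projection q" unfolding is_projection_def q_def using rank1_bcl by blast
  have "q \<circ> p = q"
  proof (rule ext)
    fix w
    have "cinner e (p w) = cinner (p e) w" using adp unfolding is_adjoint_def by simp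
    then show "(q \<circ> p) w = q w" unfolding q_def using pe by simp
  qed
  moreover have "q \<noteq> (\<lambda>x. 0)"
  proof
    assume "q = (\<lambda>x. 0)"
    then have "q e = 0" by simp
    then show False unfolding q_def using ee ne by (simp add: scaleC_one)
  qed
  ultimately have "q = p" using minp[OF qc qp] by blast
  then show ?thesis using ne unfolding q_def by blast
qed

lemma rank1_orth:
  assumes "norm (e::'a::complex_inner) = 1" "norm f = 1"
    and "(\<lambda>z. cinner e z *\<^sub>C e) \<circ> (\<lambda>z. cinner f z *\<^sub>C f) = (\<lambda>x. 0)"
  shows "cinner e f = 0"
proof -
  have "((\<lambda>z. cinner e z *\<^sub>C e) \<circ> (\<lambda>z. cinner f z *\<^sub>C f)) f = 0" using assms(3) by simp
  then have "cinner e (cinner f f *\<^sub>C f) *\<^sub>C e = 0" by simp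
  then have "cinner e f *\<^sub>C e = 0" using cinner_unit[OF assms(2)]
    by (simp only: cinner_scaleC_right mult_1)
  moreover have "e \<noteq> 0" using assms(1) by auto
  ultimately show ?thesis by (simp add: scaleC_eq_0_iff)
qed




lemma is_adjoint_sym: "is_adjoint a S \<Longrightarrow> is_adjoint S (a::'a::complex_inner \<Rightarrow> 'a)"
  unfolding is_adjoint_def by (metis cinner_commute)

lemma adj_add: "is_adjoint a S \<Longrightarrow> S (x + y) = S x + S (y::'a::complex_inner)"
proof -
  assume "is_adjoint a S"
  then have h: "\<And>u v. cinner u (S v) = cinner (a u) v" unfolding is_adjoint_def by simp
  show ?thesis by (rule cinner_ext) (simp add: h cinner_add_right)
qed

lemma adj_scaleC: "is_adjoint a S \<Longrightarrow> S (c *\<^sub>C x) = c *\<^sub>C S (x::'a::complex_inner)"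
proof -
  assume "is_adjoint a S"
  then have h: "\<And>u v. cinner u (S v) = cinner (a u) v" unfolding is_adjoint_def by simp
  show ?thesis by (rule cinner_ext) (simp add: h cinner_scaleC_right)
qed

lemma adj_bound:
  assumes bl: "bounded_linear F" and adj: "is_adjoint F G"
  shows "norm (G z) \<le> onorm F * norm (z::'a::complex_inner)"
proof (cases "G z = 0")
  case True then show ?thesis using onorm_pos_le[OF bl] by simp
next
  case False
  have "complex_of_real ((norm (G z))\<^sup>2) = cinner (G z) (G z)" by (simp add: cinner_norm)
  also have "\<dots> = cinner (F (G z)) z" using adj unfolding is_adjoint_def by simp
  finally have "(norm (G z))\<^sup>2 = cmod (cinner (F (G z)) z)"
    by (metis norm_of_real abs_of_nonneg zero_le_power2)
  also have "\<dots> \<le> norm (F (G z)) * norm z" by (rule Cauchy_Schwarz)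
  also have "\<dots> \<le> onorm F * norm (G z) * norm z"
    by (intro mult_right_mono onorm[OF bl]) simp
  finally have "norm (G z) * norm (G z) \<le> (onorm F * norm z) * norm (G z)"
    by (simp add: power2_eq_square algebra_simps)
  then show ?thesis using False by simp
qed

lemma adj_bcl:
  assumes bl: "bounded_linear F" and adj: "is_adjoint F (G::'a::complex_inner \<Rightarrow> 'a)"
  shows "bounded_clinear G"
proof -
  have "bounded_linear G"
  proof (rule bounded_linear_intro[where K="onorm F"])
    fix x y show "G (x + y) = G x + G y" using adj by (rule adj_add)
  next
    fix r :: real and x show "G (r *\<^sub>R x) = r *\<^sub>R G x"
      using adj_scaleC[OF adj] by (simp add: scaleR_scaleC)
  next
    fix x show "norm (G x) \<le> norm x * onorm F" using adj_bound[OF bl adj] by (simp add: mult.commute)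
  qed
  then show ?thesis unfolding bounded_clinear_def using adj_scaleC[OF adj] by blast
qed

lemma bcl_diff_op: "bounded_clinear S \<Longrightarrow> bounded_clinear T \<Longrightarrow> bounded_linear (\<lambda>x. S x - T x)"
  by (intro bounded_linear_sub bcl_bl)

lemma onorm_diff_tendsto_pointwise:
  assumes "\<And>k. bounded_clinear (f k)" "bounded_clinear T"
    and "(\<lambda>k. onorm (\<lambda>x. f k x - T x)) \<longlonglongrightarrow> 0"
  shows "(\<lambda>k. f k z - T z) \<longlonglongrightarrow> 0" "(\<lambda>k. f k z) \<longlonglongrightarrow> T z"
proof -
  have b: "\<forall>k. norm (f k z - T z) \<le> onorm (\<lambda>x. f k x - T x) * norm z"
    using onorm[OF bcl_diff_op[OF assms(1,2)]] by blast
  have l: "(\<lambda>k. onorm (\<lambda>x. f k x - T x) * norm z) \<longlonglongrightarrow> 0"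
    using tendsto_mult_left_zero[OF assms(3)] by simp
  show "(\<lambda>k. f k z - T z) \<longlonglongrightarrow> 0"
    using Lim_null_comparison[of "\<lambda>k. f k z - T z" "\<lambda>k. onorm (\<lambda>x. f k x - T x) * norm z" sequentially] b l
    by (simp add: always_eventually)
  then show "(\<lambda>k. f k z) \<longlonglongrightarrow> T z" by (rule LIM_zero_cancel)
qed




lemma compact_limit:
  fixes f :: "nat \<Rightarrow> 'h::chilbert_space \<Rightarrow> 'h"
  assumes fc: "\<And>k. f k \<in> compact_ops" and bT: "bounded_clinear T"
    and lim: "(\<lambda>k. onorm (\<lambda>x. f k x - T x)) \<longlonglongrightarrow> 0"
  shows "T \<in> compact_ops"
proof -
  have "compact (closure (T ` cball 0 1))"
    unfolding compact_eq_totally_bounded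
  proof (intro conjI allI impI)
    show "complete (closure (T ` cball 0 1))" by (simp add: complete_eq_closed)
  next
    fix \<epsilon> :: real assume ep: "\<epsilon> > 0"
    then have "\<epsilon>/3 > 0" by simp
    then obtain N where N: "onorm (\<lambda>x. f N x - T x) < \<epsilon>/3"
    proof -
      have "\<forall>\<^sub>F k in sequentially. onorm (\<lambda>x. f k x - T x) < \<epsilon>/3"
        using order_tendstoD(2)[OF lim \<open>\<epsilon>/3 > 0\<close>] .
      then obtain N where "\<forall>k\<ge>N. onorm (\<lambda>x. f k x - T x) < \<epsilon>/3"
        unfolding eventually_sequentially by blast
      then show ?thesis using that by blast
    qed
    have "compact (closure (f N ` cball 0 1))" using fc[of N] unfolding compact_ops_def by simp
    then obtain K where K: "finite K" "closure (f N ` cball 0 1) \<subseteq> (\<Union>x\<in>K. ball x (\<epsilon>/3))"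
      unfolding compact_eq_totally_bounded using \<open>\<epsilon>/3 > 0\<close> by blast
    have bl: "bounded_linear (\<lambda>x. f N x - T x)"
      by (rule bcl_diff_op[OF compact_ops_bcl[OF fc] bT])
    have "closure (T ` cball 0 1) \<subseteq> (\<Union>x\<in>K. ball x \<epsilon>)"
    proof
      fix w assume "w \<in> closure (T ` cball 0 1)"
      then obtain v where v: "v \<in> T ` cball 0 1" "dist v w < \<epsilon>/3"
        using closure_approachable \<open>\<epsilon>/3 > 0\<close> by blast
      then obtain z where z: "norm z \<le> 1" "v = T z" by auto
      have "f N z \<in> f N ` cball 0 1" using z(1) by simp
      then have "f N z \<in> closure (f N ` cball 0 1)" using closure_subset[of "f N ` cball 0 1"] by blast
      then have "f N z \<in> (\<Union>x\<in>K. ball x (\<epsilon>/3))" using K(2) by (rule subsetD[rotated])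
      then obtain x where x: "x \<in> K" "f N z \<in> ball x (\<epsilon>/3)" by (rule UN_E)
      then have x2: "dist x (f N z) < \<epsilon>/3" by simp
      have "norm (f N z - T z) \<le> onorm (\<lambda>x. f N x - T x) * norm z" using onorm[OF bl] by blast
      also have "\<dots> \<le> onorm (\<lambda>x. f N x - T x)"
        using z(1) onorm_pos_le[OF bl] by (simp add: mult_left_le)
      finally have "dist (f N z) v < \<epsilon>/3" using N z(2) by (simp add: dist_norm)
      then have "dist x w < \<epsilon>" using x2 v(2) dist_triangle[of x w "f N z"] dist_triangle[of "f N z" w v]
        by linarith
      then show "w \<in> (\<Union>x\<in>K. ball x \<epsilon>)" using x(1) by auto
    qed
    then show "\<exists>k. finite k \<and> closure (T ` cball 0 1) \<subseteq> (\<Union>x\<in>k. ball x \<epsilon>)"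
      using K(1) by blast
  qed
  then show ?thesis unfolding compact_ops_def using bT by blast
qed


lemma adjoint_diff: "is_adjoint a S \<Longrightarrow> is_adjoint b T \<Longrightarrow>
   is_adjoint (\<lambda>x. a x - b x) (\<lambda>y. S y - T (y::'a::complex_inner))"
  unfolding is_adjoint_def by (simp add: cinner_diff_left cinner_diff_right)

lemma onorm_diff3:
  assumes "bounded_linear (\<lambda>x. a x - c x)" "bounded_linear (\<lambda>x. b x - c x)"
  shows "onorm (\<lambda>x. a x - b x) \<le> onorm (\<lambda>x. a x - c x) + onorm (\<lambda>x. b x - (c x::'b::real_normed_vector))"
proof -
  have bl2: "bounded_linear (\<lambda>x. - (b x - c x))" using bounded_linear_minus[OF assms(2)] .
  have "onorm (\<lambda>x. (a x - c x) + - (b x - c x)) \<le> onorm (\<lambda>x. a x - c x) + onorm (\<lambda>x. - (b x - c x))"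
    by (rule onorm_triangle[OF assms(1) bl2])
  moreover have "(\<lambda>x. (a x - c x) + - (b x - c x)) = (\<lambda>x. a x - b x)" by (rule ext) simp
  moreover have "onorm (\<lambda>x. - (b x - c x)) = onorm (\<lambda>x. b x - c x)" by (rule onorm_neg)
  ultimately show ?thesis by simp
qed

lemma adjoint_limit:
  fixes f g :: "nat \<Rightarrow> 'h::chilbert_space \<Rightarrow> 'h"
  assumes bf: "\<And>k. bounded_clinear (f k)" and adj: "\<And>k. is_adjoint (f k) (g k)"
    and bT: "bounded_clinear T"
    and lim: "(\<lambda>k. onorm (\<lambda>x. f k x - T x)) \<longlonglongrightarrow> 0"
  shows "\<exists>S. is_adjoint T S \<and> bounded_clinear S \<and> (\<lambda>k. onorm (\<lambda>x. g k x - S x)) \<longlonglongrightarrow> 0"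
proof -
  define d where "d k = onorm (\<lambda>x. f k x - T x)" for k
  have bld: "\<And>k. bounded_linear (\<lambda>x. f k x - T x)" by (rule bcl_diff_op[OF bf bT])
  have d0: "\<And>k. d k \<ge> 0" unfolding d_def by (rule onorm_pos_le[OF bld])
  have dlim: "d \<longlonglongrightarrow> 0" using lim unfolding d_def by simp
  have gb: "norm (g j z - g k z) \<le> (d j + d k) * norm z" for j k z
  proof -
    have "norm (g j z - g k z) \<le> onorm (\<lambda>x. f j x - f k x) * norm z"
      by (rule adj_bound[OF bcl_diff_op[OF bf bf] adjoint_diff[OF adj adj]])
    also have "\<dots> \<le> (d j + d k) * norm z"
      unfolding d_def by (intro mult_right_mono onorm_diff3 bld) simp
    finally show ?thesis .
  qed
  have conv: "convergent (\<lambda>k. g k z)" for z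
  proof -
    have "Cauchy (\<lambda>k. g k z)"
    proof (rule metric_CauchyI)
      fix e :: real assume e: "e > 0"
      define e' where "e' = e / (2 * (norm z + 1))"
      have pos: "2 * (norm z + 1) > 0" by (smt (verit) norm_ge_zero)
      have pos1: "norm z + 1 > 0" by (smt (verit) norm_ge_zero)
      have e': "e' > 0" unfolding e'_def using e pos by (rule divide_pos_pos)
      have "\<forall>\<^sub>F k in sequentially. d k < e'" using order_tendstoD(2)[OF dlim e'] .
      then obtain M where M: "\<And>k. k \<ge> M \<Longrightarrow> d k < e'" unfolding eventually_sequentially by blast
      have "\<forall>m\<ge>M. \<forall>n\<ge>M. dist (g m z) (g n z) < e"
      proof (intro allI impI)
        fix m n assume mn: "m \<ge> M" "n \<ge> M"
        have "dist (g m z) (g n z) \<le> (d m + d n) * norm z" using gb by (simp add: dist_norm)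
        also have "\<dots> \<le> (2 * e') * norm z"
          using M[OF mn(1)] M[OF mn(2)] by (intro mult_right_mono) auto
        also have "\<dots> < e"
        proof -
          have "(2 * e') * norm z = e * (norm z / (norm z + 1))" unfolding e'_def
            using pos1 by (simp add: field_simps)
          also have "\<dots> < e * 1" using e pos1 by (intro mult_strict_left_mono) (auto simp: divide_less_eq)
          finally show ?thesis by simp
        qed
        finally show "dist (g m z) (g n z) < e" .
      qed
      then show "\<exists>M. \<forall>m\<ge>M. \<forall>n\<ge>M. dist (g m z) (g n z) < e" by blast
    qed
    then show ?thesis by (simp add: Cauchy_convergent_iff)
  qed
  define S where "S z = lim (\<lambda>k. g k z)" for z
  have gS: "(\<lambda>k. g k z) \<longlonglongrightarrow> S z" for z unfolding S_def using conv by (simp add: convergent_LIMSEQ_iff)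
  have adjS: "is_adjoint T S" unfolding is_adjoint_def
  proof (intro allI)
    fix x y
    have "(\<lambda>k. f k x) \<longlonglongrightarrow> T x" using onorm_diff_tendsto_pointwise(2)[OF bf bT lim] .
    then have 1: "(\<lambda>k. cinner (f k x) y) \<longlonglongrightarrow> cinner (T x) y" by (rule tendsto_cinner_left)
    have 2: "(\<lambda>k. cinner x (g k y)) \<longlonglongrightarrow> cinner x (S y)" using gS by (rule tendsto_cinner_right)
    have "(\<lambda>k. cinner (f k x) y) = (\<lambda>k. cinner x (g k y))" using adj unfolding is_adjoint_def by simp
    then show "cinner (T x) y = cinner x (S y)" using 1 2 LIMSEQ_unique by metis
  qed
  have bS: "bounded_clinear S" by (rule adj_bcl[OF bcl_bl[OF bT] adjS])
  have ob: "onorm (\<lambda>x. g k x - S x) \<le> d k" for k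
  proof (rule onorm_bound[OF d0])
    fix z show "norm (g k z - S z) \<le> d k * norm z"
      unfolding d_def by (rule adj_bound[OF bld adjoint_diff[OF adj adjS]])
  qed
  have "(\<lambda>k. onorm (\<lambda>x. g k x - S x)) \<longlonglongrightarrow> 0"
  proof (rule Lim_null_comparison[OF always_eventually dlim], rule allI)
    fix k
    have "0 \<le> onorm (\<lambda>x. g k x - S x)" by (rule onorm_pos_le[OF bcl_diff_op[OF _ bS]])
      (rule adj_bcl[OF bcl_bl[OF bf] adj])
    then show "norm (onorm (\<lambda>x. g k x - S x)) \<le> d k" using ob[of k] by simp
  qed
  then show ?thesis using adjS bS by blast
qed




locale onfam =
  fixes e :: "nat \<Rightarrow> 'h::chilbert_space" and I :: "nat set"
  assumes unit: "n \<in> I \<Longrightarrow> norm (e n) = 1"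
    and orth: "n \<in> I \<Longrightarrow> m \<in> I \<Longrightarrow> n \<noteq> m \<Longrightarrow> cinner (e n) (e m) = 0"
begin

definition W :: "'h set" where "W = {y. \<forall>n\<in>I. cinner (e n) y = 0}"

definition lam :: "nat \<Rightarrow> ('h \<Rightarrow> 'h) \<Rightarrow> complex" where "lam n a = cinner (e n) (a (e n))"

definition Q :: "('h \<Rightarrow> 'h) \<Rightarrow> bool" where
  "Q a \<longleftrightarrow> (\<forall>n\<in>I. a (e n) = lam n a *\<^sub>C e n \<and> (\<forall>z. cinner (e n) (a z) = lam n a * cinner (e n) z))
     \<and> (\<forall>y\<in>W. a y = 0 \<and> (\<forall>z. cinner y (a z) = 0))"

definition AA :: "('h \<Rightarrow> 'h) set" where
  "AA = {a. a \<in> compact_ops \<and> Q a \<and> (\<exists>S\<in>compact_ops. is_adjoint a S)}"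

lemma ee: "n \<in> I \<Longrightarrow> cinner (e n) (e n) = 1" using unit by (simp add: cinner_unit)

lemma QD1: "Q a \<Longrightarrow> n \<in> I \<Longrightarrow> a (e n) = lam n a *\<^sub>C e n" unfolding Q_def by blast
lemma QD2: "Q a \<Longrightarrow> n \<in> I \<Longrightarrow> cinner (e n) (a z) = lam n a * cinner (e n) z" unfolding Q_def by blast
lemma QD3: "Q a \<Longrightarrow> y \<in> W \<Longrightarrow> a y = 0" unfolding Q_def by blast
lemma QD4: "Q a \<Longrightarrow> y \<in> W \<Longrightarrow> cinner y (a z) = 0" unfolding Q_def by blast

lemma QI:
  assumes "\<And>n. n \<in> I \<Longrightarrow> a (e n) = lam n a *\<^sub>C e n"
    and "\<And>n z. n \<in> I \<Longrightarrow> cinner (e n) (a z) = lam n a * cinner (e n) z"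
    and "\<And>y. y \<in> W \<Longrightarrow> a y = 0" and "\<And>y z. y \<in> W \<Longrightarrow> cinner y (a z) = 0"
  shows "Q a"
  unfolding Q_def using assms by blast

lemma Q_adj:
  assumes Qa: "Q a" and adj: "is_adjoint a S"
  shows "Q S"
proof -
  have h: "\<And>u v. cinner u (S v) = cinner (a u) v" using adj unfolding is_adjoint_def by simp
  have Se: "S (e n) = cnj (lam n a) *\<^sub>C e n" if n: "n \<in> I" for n
  proof (rule cinner_ext)
    fix x
    have "cinner x (S (e n)) = cinner (a x) (e n)" by (rule h)
    also have "\<dots> = cnj (cinner (e n) (a x))" by (rule cinner_commute)
    also have "\<dots> = cnj (lam n a) * cnj (cinner (e n) x)" using QD2[OF Qa n] by simp
    also have "\<dots> = cinner x (cnj (lam n a) *\<^sub>C e n)"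
      by (simp add: cinner_scaleC_right cinner_commute[of x])
    finally show "cinner x (S (e n)) = cinner x (cnj (lam n a) *\<^sub>C e n)" .
  qed
  have lS: "lam n S = cnj (lam n a)" if n: "n \<in> I" for n
    unfolding lam_def[of n S] using Se[OF n] ee[OF n] by (simp add: cinner_scaleC_right)
  show ?thesis
  proof (rule QI)
    fix n assume n: "n \<in> I"
    show "S (e n) = lam n S *\<^sub>C e n" using Se[OF n] lS[OF n] by simp
    fix z
    have "cinner (e n) (S z) = cinner (a (e n)) z" by (rule h)
    also have "\<dots> = cnj (lam n a) * cinner (e n) z" using QD1[OF Qa n] by (simp add: cinner_scaleC_left)
    finally show "cinner (e n) (S z) = lam n S * cinner (e n) z" using lS[OF n] by simp
  next
    fix y assume y: "y \<in> W"
    show "S y = 0"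
    proof (rule cinner_ext)
      fix x
      have "cinner x (S y) = cinner (a x) y" by (rule h)
      also have "\<dots> = cnj (cinner y (a x))" by (rule cinner_commute)
      also have "\<dots> = 0" using QD4[OF Qa y] by simp
      finally show "cinner x (S y) = cinner x 0" by simp
    qed
    fix z
    show "cinner y (S z) = 0" using h[of y z] QD3[OF Qa y] by simp
  qed
qed

lemma Q_rank1: "m \<in> I \<Longrightarrow> Q (\<lambda>z. cinner (e m) z *\<^sub>C e m)"
proof (rule QI)
  fix n assume m: "m \<in> I" and n: "n \<in> I"
  show "cinner (e m) (e n) *\<^sub>C e m = lam n (\<lambda>z. cinner (e m) z *\<^sub>C e m) *\<^sub>C e n"
  proof (cases "n = m")
    case True then show ?thesis unfolding lam_def using ee[OF m] by (simp add: cinner_scaleC_right)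
  next
    case False then show ?thesis unfolding lam_def using orth[OF m n] orth[OF n m]
      by (simp add: cinner_scaleC_right)
  qed
  fix z
  show "cinner (e n) (cinner (e m) z *\<^sub>C e m) = lam n (\<lambda>z. cinner (e m) z *\<^sub>C e m) * cinner (e n) z"
  proof (cases "n = m")
    case True then show ?thesis unfolding lam_def using ee[OF m] by (simp add: cinner_scaleC_right)
  next
    case False then show ?thesis unfolding lam_def using orth[OF m n] orth[OF n m]
      by (simp add: cinner_scaleC_right)
  qed
next
  fix y assume m: "m \<in> I" and y: "y \<in> W"
  then have "cinner (e m) y = 0" unfolding W_def by blast
  then show "cinner (e m) y *\<^sub>C e m = 0" by simp
  fix z
  have "cinner y (e m) = 0" using \<open>cinner (e m) y = 0\<close> by (subst cinner_commute) simp
  then show "cinner y (cinner (e m) z *\<^sub>C e m) = 0" by (simp add: cinner_scaleC_right)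
qed

lemma Q_zero: "Q (\<lambda>x. 0)"
  by (rule QI) (simp_all add: lam_def)

lemma Q_add: "Q a \<Longrightarrow> Q b \<Longrightarrow> Q (op_add a b)"
proof -
  assume Qa: "Q a" and Qb: "Q b"
  have l: "lam n (\<lambda>x. a x + b x) = lam n a + lam n b" for n
    unfolding lam_def op_add_def by (simp add: cinner_add_right)
  show ?thesis
  proof (rule QI)
    fix n assume n: "n \<in> I"
    show "op_add a b (e n) = lam n (op_add a b) *\<^sub>C e n"
      unfolding op_add_def l using QD1[OF Qa n] QD1[OF Qb n] by (simp add: scaleC_add_left)
    fix z show "cinner (e n) (op_add a b z) = lam n (op_add a b) * cinner (e n) z"
      unfolding op_add_def l using QD2[OF Qa n] QD2[OF Qb n] by (simp add: cinner_add_right algebra_simps)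
  next
    fix y assume y: "y \<in> W"
    show "op_add a b y = 0" unfolding op_add_def using QD3[OF Qa y] QD3[OF Qb y] by simp
    fix z show "cinner y (op_add a b z) = 0"
      unfolding op_add_def using QD4[OF Qa y] QD4[OF Qb y] by (simp add: cinner_add_right)
  qed
qed

lemma Q_scale: "Q a \<Longrightarrow> Q (op_scale c a)"
proof -
  assume Qa: "Q a"
  have l: "lam n (\<lambda>x. c *\<^sub>C a x) = c * lam n a" for n
    unfolding lam_def op_scale_def by (simp add: cinner_scaleC_right)
  show ?thesis
  proof (rule QI)
    fix n assume n: "n \<in> I"
    show "op_scale c a (e n) = lam n (op_scale c a) *\<^sub>C e n"
      unfolding op_scale_def l using QD1[OF Qa n] by (simp add: scaleC_scaleC)
    fix z show "cinner (e n) (op_scale c a z) = lam n (op_scale c a) * cinner (e n) z"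
      unfolding op_scale_def l using QD2[OF Qa n] by (simp add: cinner_scaleC_right)
  next
    fix y assume y: "y \<in> W"
    show "op_scale c a y = 0" unfolding op_scale_def using QD3[OF Qa y] by simp
    fix z show "cinner y (op_scale c a z) = 0"
      unfolding op_scale_def using QD4[OF Qa y] by (simp add: cinner_scaleC_right)
  qed
qed

lemma Q_comp: "Q a \<Longrightarrow> Q b \<Longrightarrow> bounded_clinear a \<Longrightarrow> Q (a \<circ> b)"
proof -
  assume Qa: "Q a" and Qb: "Q b" and ba: "bounded_clinear a"
  have l: "lam n (a \<circ> b) = lam n b * lam n a" if n: "n \<in> I" for n
  proof -
    have "lam n (a \<circ> b) = cinner (e n) (a (b (e n)))" unfolding lam_def by simp
    also have "\<dots> = cinner (e n) (a (lam n b *\<^sub>C e n))" using QD1[OF Qb n] by simp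
    also have "\<dots> = lam n b * lam n a"
      by (simp only: bcl_scaleC[OF ba] cinner_scaleC_right lam_def)
    finally show ?thesis .
  qed
  show ?thesis
  proof (rule QI)
    fix n assume n: "n \<in> I"
    show "(a \<circ> b) (e n) = lam n (a \<circ> b) *\<^sub>C e n"
      unfolding l[OF n] using QD1[OF Qa n] QD1[OF Qb n] by (simp add: bcl_scaleC[OF ba] scaleC_scaleC)
    fix z show "cinner (e n) ((a \<circ> b) z) = lam n (a \<circ> b) * cinner (e n) z"
      unfolding l[OF n] using QD2[OF Qa n] QD2[OF Qb n] by simp
  next
    fix y assume y: "y \<in> W"
    show "(a \<circ> b) y = 0" using QD3[OF Qb y] bcl_zero[OF ba] by simp
    fix z show "cinner y ((a \<circ> b) z) = 0" using QD4[OF Qa y] by simp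
  qed
qed

lemma Q_limit:
  assumes Qf: "\<And>k. Q (f k)" and bf: "\<And>k. bounded_clinear (f k)" and bT: "bounded_clinear T"
    and lim: "(\<lambda>k. onorm (\<lambda>x. f k x - T x)) \<longlonglongrightarrow> 0"
  shows "Q T"
proof -
  have pw: "(\<lambda>k. f k z) \<longlonglongrightarrow> T z" for z using onorm_diff_tendsto_pointwise(2)[OF bf bT lim] .
  have ll: "(\<lambda>k. lam n (f k)) \<longlonglongrightarrow> lam n T" for n
    unfolding lam_def by (rule tendsto_cinner_right[OF pw])
  show ?thesis
  proof (rule QI)
    fix n assume n: "n \<in> I"
    have "(\<lambda>k. f k (e n)) \<longlonglongrightarrow> lam n T *\<^sub>C e n"
    proof -
      have "(\<lambda>k. lam n (f k) *\<^sub>C e n) \<longlonglongrightarrow> lam n T *\<^sub>C e n"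
        using bounded_linear.tendsto[OF bl_scaleC_left ll] .
      moreover have "(\<lambda>k. f k (e n)) = (\<lambda>k. lam n (f k) *\<^sub>C e n)" using QD1[OF Qf n] by auto
      ultimately show ?thesis by simp
    qed
    then show "T (e n) = lam n T *\<^sub>C e n" using pw LIMSEQ_unique by blast
    fix z
    have 1: "(\<lambda>k. cinner (e n) (f k z)) \<longlonglongrightarrow> cinner (e n) (T z)" by (rule tendsto_cinner_right[OF pw])
    have "(\<lambda>k. lam n (f k) * cinner (e n) z) \<longlonglongrightarrow> lam n T * cinner (e n) z"
      by (rule tendsto_mult[OF ll tendsto_const])
    moreover have "(\<lambda>k. cinner (e n) (f k z)) = (\<lambda>k. lam n (f k) * cinner (e n) z)"
      using QD2[OF Qf n] by auto
    ultimately show "cinner (e n) (T z) = lam n T * cinner (e n) z" using 1 LIMSEQ_unique by metis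
  next
    fix y assume y: "y \<in> W"
    have "(\<lambda>k. f k y) = (\<lambda>k. 0)" using QD3[OF Qf y] by auto
    then show "T y = 0" using pw[of y] LIMSEQ_unique tendsto_const by metis
    fix z
    have "(\<lambda>k. cinner y (f k z)) = (\<lambda>k. 0)" using QD4[OF Qf y] by auto
    then show "cinner y (T z) = 0" using tendsto_cinner_right[OF pw, of y z] LIMSEQ_unique tendsto_const by metis
  qed
qed

end



context onfam begin

lemma rank1_AA: "m \<in> I \<Longrightarrow> (\<lambda>z. cinner (e m) z *\<^sub>C e m) \<in> AA"
proof -
  assume m: "m \<in> I"
  have "is_adjoint (\<lambda>z. cinner (e m) z *\<^sub>C e m) (\<lambda>z. cinner (e m) z *\<^sub>C e m)"
    unfolding is_adjoint_def
    by (simp add: cinner_scaleC_right cinner_scaleC_left cinner_commute[of _ "e m"] mult.commute)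
  then show ?thesis unfolding AA_def using rank1_compact Q_rank1[OF m] by blast
qed

lemma AA_cstar: "cstar_subalgebra AA"
  unfolding cstar_subalgebra_def
proof (intro conjI ballI allI impI)
  show "AA \<subseteq> compact_ops" unfolding AA_def by blast
next
  have "is_adjoint (\<lambda>x. 0::'h) (\<lambda>x. 0)" unfolding is_adjoint_def by simp
  then show "(\<lambda>x. 0) \<in> AA" unfolding AA_def using zero_compact Q_zero by blast
next
  fix S T assume S: "S \<in> AA" and T: "T \<in> AA"
  then obtain S' T' where S': "S' \<in> compact_ops" "is_adjoint S S'" and T': "T' \<in> compact_ops" "is_adjoint T T'"
    unfolding AA_def by blast
  have "is_adjoint (op_add S T) (op_add S' T')"
    using S'(2) T'(2) unfolding is_adjoint_def op_add_def by (simp add: cinner_add_left cinner_add_right)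
  then show "op_add S T \<in> AA" using S T S' T' unfolding AA_def by (blast intro: op_add_compact Q_add)
next
  fix S T assume S: "S \<in> AA" and T: "T \<in> AA"
  then obtain S' T' where S': "S' \<in> compact_ops" "is_adjoint S S'" and T': "T' \<in> compact_ops" "is_adjoint T T'"
    unfolding AA_def by blast
  have "is_adjoint (S \<circ> T) (T' \<circ> S')"
    using S'(2) T'(2) unfolding is_adjoint_def by simp
  moreover have "S \<circ> T \<in> compact_ops" using S T unfolding AA_def by (blast intro: comp_compact compact_ops_bcl)
  moreover have "T' \<circ> S' \<in> compact_ops" using S' T' by (blast intro: comp_compact compact_ops_bcl)
  moreover have "Q (S \<circ> T)" using S T unfolding AA_def by (blast intro: Q_comp compact_ops_bcl)
  ultimately show "S \<circ> T \<in> AA" unfolding AA_def by blast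
next
  fix c T assume T: "T \<in> AA"
  then obtain T' where T': "T' \<in> compact_ops" "is_adjoint T T'" unfolding AA_def by blast
  have "is_adjoint (op_scale c T) (op_scale (cnj c) T')"
    using T'(2) unfolding is_adjoint_def op_scale_def by (simp add: cinner_scaleC_left cinner_scaleC_right)
  then show "op_scale c T \<in> AA" using T T' unfolding AA_def by (blast intro: op_scale_compact Q_scale)
next
  fix T assume T: "T \<in> AA"
  then obtain T' where T': "T' \<in> compact_ops" "is_adjoint T T'" unfolding AA_def by blast
  have "T' \<in> AA" unfolding AA_def using T'(1) Q_adj[OF _ T'(2)] T is_adjoint_sym[OF T'(2)]
    unfolding AA_def by blast
  then show "\<exists>S\<in>AA. is_adjoint T S" using T'(2) by blast
next
  fix f T assume as: "(\<forall>n. f n \<in> AA) \<and> bounded_clinear T \<and> (\<lambda>n. onorm (\<lambda>x. f n x - T x)) \<longlonglongrightarrow> 0"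
  then have fA: "\<And>n. f n \<in> AA" and bT: "bounded_clinear T" and lim: "(\<lambda>n. onorm (\<lambda>x. f n x - T x)) \<longlonglongrightarrow> 0"
    by auto
  have fc: "\<And>n. f n \<in> compact_ops" using fA unfolding AA_def by blast
  have bf: "\<And>n. bounded_clinear (f n)" using fc by (rule compact_ops_bcl)
  have "\<exists>S. S \<in> compact_ops \<and> is_adjoint (f n) S" for n using fA[of n] unfolding AA_def by blast
  then obtain g where g: "\<And>n. g n \<in> compact_ops" "\<And>n. is_adjoint (f n) (g n)" by metis
  obtain S where S: "is_adjoint T S" "bounded_clinear S" "(\<lambda>k. onorm (\<lambda>x. g k x - S x)) \<longlonglongrightarrow> 0"
    using adjoint_limit[OF bf g(2) bT lim] by blast
  have "S \<in> compact_ops" by (rule compact_limit[OF g(1) S(2) S(3)])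
  moreover have "T \<in> compact_ops" by (rule compact_limit[OF fc bT lim])
  moreover have "Q T" using Q_limit[OF _ bf bT lim] fA unfolding AA_def by blast
  ultimately show "T \<in> AA" unfolding AA_def using S(1) by blast
qed

end



lemma cinner_sum_right: "cinner (x::'a::complex_inner) (sum f A) = (\<Sum>i\<in>A. cinner x (f i))"
  by (induction A rule: infinite_finite_induct) (simp_all add: cinner_add_right)

lemma cinner_sum_left: "cinner (sum f A) (x::'a::complex_inner) = (\<Sum>i\<in>A. cinner (f i) x)"
  by (induction A rule: infinite_finite_induct) (simp_all add: cinner_add_left)

context onfam begin

lemma onsum_inner:
  assumes F: "finite F" "F \<subseteq> I" and n: "n \<in> I"
  shows "cinner (e n) (\<Sum>m\<in>F. a m *\<^sub>C e m) = (if n \<in> F then a n else 0)"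
proof -
  have "cinner (e n) (\<Sum>m\<in>F. a m *\<^sub>C e m) = (\<Sum>m\<in>F. a m * cinner (e n) (e m))"
    by (simp add: cinner_sum_right cinner_scaleC_right)
  also have "\<dots> = (\<Sum>m\<in>F. if m = n then a n else 0)"
  proof (rule sum.cong[OF refl])
    fix m assume "m \<in> F"
    then have m: "m \<in> I" using F by blast
    show "a m * cinner (e n) (e m) = (if m = n then a n else 0)"
      using ee[OF n] orth[OF n m] by auto
  qed
  also have "\<dots> = (if n \<in> F then a n else 0)" using F(1) by (simp add: sum.delta)
  finally show ?thesis .
qed

lemma onsum_norm:
  assumes F: "finite F" "F \<subseteq> I"
  shows "(norm (\<Sum>m\<in>F. a m *\<^sub>C e m))\<^sup>2 = (\<Sum>m\<in>F. (cmod (a m))\<^sup>2)"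
proof -
  let ?u = "\<Sum>m\<in>F. a m *\<^sub>C e m"
  have "complex_of_real ((norm ?u)\<^sup>2) = cinner ?u ?u" by (simp add: cinner_norm)
  also have "\<dots> = (\<Sum>n\<in>F. cnj (a n) * cinner (e n) ?u)"
    by (simp add: cinner_sum_left cinner_scaleC_left)
  also have "\<dots> = (\<Sum>n\<in>F. complex_of_real ((cmod (a n))\<^sup>2))"
  proof (rule sum.cong[OF refl])
    fix n assume n: "n \<in> F"
    then have "cinner (e n) ?u = a n" using onsum_inner[OF F] F(2) by auto
    then show "cnj (a n) * cinner (e n) ?u = complex_of_real ((cmod (a n))\<^sup>2)"
      by (simp add: cnj_mult_cmod)
  qed
  also have "\<dots> = complex_of_real (\<Sum>n\<in>F. (cmod (a n))\<^sup>2)" by simp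
  finally show ?thesis using of_real_eq_iff by blast
qed

lemma bessel_fin:
  assumes F: "finite F" "F \<subseteq> I"
  shows "(\<Sum>m\<in>F. (cmod (cinner (e m) x))\<^sup>2) \<le> (norm x)\<^sup>2"
proof -
  define c where "c m = cinner (e m) x" for m
  let ?s = "\<Sum>m\<in>F. c m *\<^sub>C e m"
  define r where "r = (\<Sum>m\<in>F. (cmod (c m))\<^sup>2)"
  have sx: "cinner ?s x = complex_of_real r"
    unfolding r_def by (simp add: cinner_sum_left cinner_scaleC_left c_def[symmetric] cnj_mult_cmod)
  have xs: "cinner x ?s = complex_of_real r"
    using sx by (subst cinner_commute) simp
  have ss: "cinner ?s ?s = complex_of_real r"
    using onsum_norm[OF F, of c] unfolding r_def by (simp add: cinner_norm)
  have "complex_of_real ((norm (x - ?s))\<^sup>2) = cinner (x - ?s) (x - ?s)" by (simp add: cinner_norm)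
  also have "\<dots> = cinner x x - complex_of_real r"
    by (simp add: cinner_diff_left cinner_diff_right sx xs ss)
  also have "\<dots> = complex_of_real ((norm x)\<^sup>2 - r)" by (simp add: cinner_norm[of x])
  finally have "(norm (x - ?s))\<^sup>2 = (norm x)\<^sup>2 - r"
    using of_real_eq_iff by blast
  then have "r \<le> (norm x)\<^sup>2" by (metis diff_ge_0_iff_ge zero_le_power2)
  then show ?thesis unfolding r_def c_def .
qed

definition IN :: "nat \<Rightarrow> nat set" where "IN N = {i\<in>{..<N}. i \<in> I}"
definition ps :: "'h \<Rightarrow> nat \<Rightarrow> 'h" where "ps x N = (\<Sum>m\<in>IN N. cinner (e m) x *\<^sub>C e m)"

lemma IN_fin: "finite (IN N)" and IN_sub: "IN N \<subseteq> I"
  unfolding IN_def by auto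

lemma ps_conv: "convergent (ps x)"
proof -
  define t where "t i = (if i \<in> I then (cmod (cinner (e i) x))\<^sup>2 else 0)" for i
  have tsum: "sum t A = (\<Sum>i\<in>{i\<in>A. i \<in> I}. (cmod (cinner (e i) x))\<^sup>2)" if "finite A" for A
    unfolding t_def using that by (simp add: sum.inter_filter)
  have "summable t"
  proof (rule summableI_nonneg_bounded)
    show "0 \<le> t n" for n unfolding t_def by simp
    fix n show "(\<Sum>i<n. t i) \<le> (norm x)\<^sup>2"
      using tsum[of "{..<n}"] bessel_fin[OF IN_fin[of n] IN_sub[of n], where x=x] unfolding IN_def by simp
  qed
  then have tc: "\<forall>e>0. \<exists>N. \<forall>m\<ge>N. \<forall>n. norm (sum t {m..<n}) < e" by (simp add: summable_Cauchy)
  have dn: "norm (ps x n - ps x m) = sqrt (sum t {m..<n})" if mn: "m \<le> n" for m n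
  proof -
    have sub: "IN m \<subseteq> IN n" using mn unfolding IN_def by auto
    have "ps x n - ps x m = (\<Sum>i\<in>IN n - IN m. cinner (e i) x *\<^sub>C e i)"
      unfolding ps_def by (rule sum_diff[OF IN_fin sub, symmetric])
    then have "(norm (ps x n - ps x m))\<^sup>2 = (\<Sum>i\<in>IN n - IN m. (cmod (cinner (e i) x))\<^sup>2)"
      using onsum_norm[of "IN n - IN m" "\<lambda>i. cinner (e i) x"] IN_fin[of n] IN_sub[of n] by auto
    also have "IN n - IN m = {i\<in>{m..<n}. i \<in> I}" unfolding IN_def by auto
    also have "(\<Sum>i\<in>{i\<in>{m..<n}. i \<in> I}. (cmod (cinner (e i) x))\<^sup>2) = sum t {m..<n}"
      using tsum[of "{m..<n}"] by simp
    finally show ?thesis by (simp add: real_sqrt_unique)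
  qed
  have "Cauchy (ps x)"
  proof (rule metric_CauchyI)
    fix r :: real assume r: "r > 0"
    then obtain N where N: "\<And>m n. m \<ge> N \<Longrightarrow> norm (sum t {m..<n}) < r\<^sup>2"
      using tc by (meson zero_less_power)
    have "dist (ps x m) (ps x n) < r" if "m \<ge> N" "n \<ge> N" for m n
    proof (cases "m \<le> n")
      case True
      have "sum t {m..<n} < r\<^sup>2" using N[OF that(1), of n] by simp
      then have "sqrt (sum t {m..<n}) < r" using r by (simp add: real_sqrt_less_iff real_less_lsqrt)
      then show ?thesis using dn[OF True] by (simp add: dist_norm norm_minus_commute)
    next
      case False
      then have nm: "n \<le> m" by simp
      have "sum t {n..<m} < r\<^sup>2" using N[OF that(2), of m] by simp
      then have "sqrt (sum t {n..<m}) < r" using r by (simp add: real_sqrt_less_iff real_less_lsqrt)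
      then show ?thesis using dn[OF nm] by (simp add: dist_norm)
    qed
    then show "\<exists>M. \<forall>m\<ge>M. \<forall>n\<ge>M. dist (ps x m) (ps x n) < r" by blast
  qed
  then show ?thesis by (simp add: Cauchy_convergent_iff)
qed

lemma ps_inner: "n \<in> I \<Longrightarrow> n < N \<Longrightarrow> cinner (e n) (ps x N) = cinner (e n) x"
  unfolding ps_def using onsum_inner[OF IN_fin IN_sub] by (simp add: IN_def)

lemma decomp: "\<exists>s. ps x \<longlonglongrightarrow> s \<and> x - s \<in> W"
proof -
  obtain s where s: "ps x \<longlonglongrightarrow> s" using ps_conv convergent_def by blast
  have "cinner (e n) (x - s) = 0" if n: "n \<in> I" for n
  proof -
    have l: "(\<lambda>N. cinner (e n) (ps x N)) \<longlonglongrightarrow> cinner (e n) s" by (rule tendsto_cinner_right[OF s])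
    have "\<forall>\<^sub>F N in sequentially. cinner (e n) (ps x N) = cinner (e n) x"
      unfolding eventually_sequentially using ps_inner[OF n] by (metis Suc_le_lessD)
    then have "(\<lambda>N. cinner (e n) (ps x N)) \<longlonglongrightarrow> cinner (e n) x"
      by (rule tendsto_eventually)
    then have "cinner (e n) s = cinner (e n) x" using l LIMSEQ_unique by metis
    then show ?thesis by (simp add: cinner_diff_right)
  qed
  then show ?thesis using s unfolding W_def by blast
qed

lemma vanish:
  fixes f :: "'h \<Rightarrow> complex"
  assumes add: "\<And>u v. f (u + v) = f u + f v"
    and en: "\<And>a n. n \<in> I \<Longrightarrow> f (a *\<^sub>C e n) = 0"
    and Wz: "\<And>y. y \<in> W \<Longrightarrow> f y = 0"
    and cont: "\<And>X l. X \<longlonglongrightarrow> l \<Longrightarrow> (\<lambda>k. f (X k)) \<longlonglongrightarrow> f l"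
  shows "f x = 0"
proof -
  have f0: "f 0 = 0" using add[of 0 0] by simp
  have fs: "f (\<Sum>m\<in>F. a m *\<^sub>C e m) = 0" if "finite F" "F \<subseteq> I" for F a
    using that by (induction F rule: finite_induct) (simp_all add: f0 add en)
  obtain s where s: "ps x \<longlonglongrightarrow> s" "x - s \<in> W" using decomp by blast
  have "(\<lambda>k. f (ps x k)) \<longlonglongrightarrow> f s" using cont[OF s(1)] .
  moreover have "(\<lambda>k. f (ps x k)) = (\<lambda>k. 0)" unfolding ps_def using fs[OF IN_fin IN_sub] by simp
  ultimately have "f s = 0" using LIMSEQ_unique tendsto_const by metis
  moreover have "f x = f (x - s) + f s" using add[of "x - s" s] by simp
  ultimately show ?thesis using Wz[OF s(2)] by simp
qed

end



lemma deriv_zero: "derivation_K D \<Longrightarrow> D (\<lambda>x. 0::'h::chilbert_space) = (\<lambda>x. 0)"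
proof -
  assume D: "derivation_K D"
  have "D (op_add (\<lambda>x. 0::'h) (\<lambda>x. 0)) = op_add (D (\<lambda>x. 0)) (D (\<lambda>x. 0))"
    using D zero_compact unfolding derivation_K_def by blast
  moreover have "op_add (\<lambda>x. 0::'h) (\<lambda>x. 0) = (\<lambda>x. 0)" unfolding op_add_def by simp
  ultimately have "D (\<lambda>x. 0) = (\<lambda>z. D (\<lambda>x. 0) z + D (\<lambda>x. 0) z)" unfolding op_add_def by simp
  then have "\<And>z. D (\<lambda>x. 0) z = D (\<lambda>x. 0) z + D (\<lambda>x. 0) z" by (rule fun_cong)
  then show ?thesis by (intro ext) simp
qed

lemma deriv_compact: "derivation_K D \<Longrightarrow> a \<in> compact_ops \<Longrightarrow> D a \<in> compact_ops"
  unfolding derivation_K_def by blast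
lemma deriv_scale: "derivation_K D \<Longrightarrow> a \<in> compact_ops \<Longrightarrow> D (op_scale c a) = op_scale c (D a)"
  unfolding derivation_K_def by blast
lemma deriv_leib: "derivation_K D \<Longrightarrow> a \<in> compact_ops \<Longrightarrow> b \<in> compact_ops \<Longrightarrow>
    D (a \<circ> b) = op_add (D a \<circ> b) (a \<circ> D b)"
  unfolding derivation_K_def by blast

lemma point_dual: "dual_K (\<lambda>c. cinner y (c (x::'h::chilbert_space)))"
  unfolding dual_K_def
proof (intro conjI ballI allI)
  fix a b :: "'h \<Rightarrow> 'h"
  show "cinner y (op_add a b x) = cinner y (a x) + cinner y (b x)"
    unfolding op_add_def by (simp add: cinner_add_right)
next
  fix c and a :: "'h \<Rightarrow> 'h"
  show "cinner y (op_scale c a x) = c * cinner y (a x)"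
    unfolding op_scale_def by (simp add: cinner_scaleC_right)
next
  show "\<exists>C. \<forall>a\<in>compact_ops. cmod (cinner y (a x)) \<le> C * onorm a"
  proof (intro exI ballI)
    fix a :: "'h \<Rightarrow> 'h" assume a: "a \<in> compact_ops"
    have "cmod (cinner y (a x)) \<le> norm y * norm (a x)" by (rule Cauchy_Schwarz)
    also have "\<dots> \<le> norm y * (onorm a * norm x)"
      by (intro mult_left_mono bcl_onorm compact_ops_bcl a) simp
    finally show "cmod (cinner y (a x)) \<le> (norm y * norm x) * onorm a" by (simp add: algebra_simps)
  qed
qed

lemma transfer:
  assumes W2: "weak_2_local_derivation_K \<Delta>" and a: "a \<in> compact_ops" and b: "b \<in> compact_ops"
    and h: "\<And>D. derivation_K D \<Longrightarrow> \<alpha> * cinner y (D a x) = \<kappa> * cinner y (D b (x::'h::chilbert_space))"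
  shows "\<alpha> * cinner y (\<Delta> a x) = \<kappa> * cinner y (\<Delta> b x)"
proof -
  obtain D where "derivation_K D" "cinner y (\<Delta> a x) = cinner y (D a x)" "cinner y (\<Delta> b x) = cinner y (D b x)"
    using W2 a b point_dual[of y x] unfolding weak_2_local_derivation_K_def by blast
  then show ?thesis using h by simp
qed

context onfam begin

definition P :: "nat \<Rightarrow> 'h \<Rightarrow> 'h" where "P m = (\<lambda>z. cinner (e m) z *\<^sub>C e m)"
definition R :: "'h \<Rightarrow> 'h \<Rightarrow> 'h" where "R x = (\<lambda>z. cinner x z *\<^sub>C x)"

lemma P_compact: "P m \<in> compact_ops" unfolding P_def by (rule rank1_compact)
lemma R_compact: "R x \<in> compact_ops" unfolding R_def by (rule rank1_compact)

lemma AA_compact: "a \<in> AA \<Longrightarrow> a \<in> compact_ops" unfolding AA_def by blast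
lemma AA_Q: "a \<in> AA \<Longrightarrow> Q a" unfolding AA_def by blast

lemma D1:
  assumes D: "derivation_K D" and a: "a \<in> AA" and m: "m \<in> I"
  shows "D a (e m) = lam m a *\<^sub>C D (P m) (e m) - a (D (P m) (e m))"
proof -
  have ac: "a \<in> compact_ops" and Qa: "Q a" using a by (auto simp: AA_compact AA_Q)
  have ba: "bounded_clinear a" by (rule compact_ops_bcl[OF ac])
  have "a \<circ> P m = op_scale (lam m a) (P m)"
  proof (rule ext)
    fix z
    have "(a \<circ> P m) z = cinner (e m) z *\<^sub>C a (e m)" unfolding P_def by (simp add: bcl_scaleC[OF ba])
    also have "\<dots> = lam m a *\<^sub>C (cinner (e m) z *\<^sub>C e m)"
      using QD1[OF Qa m] by (simp add: scaleC_scaleC mult.commute)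
    finally show "(a \<circ> P m) z = op_scale (lam m a) (P m) z" unfolding op_scale_def P_def .
  qed
  then have "op_add (D a \<circ> P m) (a \<circ> D (P m)) = op_scale (lam m a) (D (P m))"
    using deriv_leib[OF D ac P_compact[of m]] deriv_scale[OF D P_compact[of m]] by simp
  then have "op_add (D a \<circ> P m) (a \<circ> D (P m)) (e m) = op_scale (lam m a) (D (P m)) (e m)"
    by (rule fun_cong)
  then have "D a (P m (e m)) + a (D (P m) (e m)) = lam m a *\<^sub>C D (P m) (e m)"
    unfolding op_add_def op_scale_def by simp
  moreover have "P m (e m) = e m" unfolding P_def using ee[OF m] by (simp add: scaleC_one)
  ultimately show ?thesis by (simp add: eq_diff_eq)
qed

lemma D2:
  assumes D: "derivation_K D" and a: "a \<in> AA" and x: "x \<in> W"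
  shows "cinner x x *\<^sub>C D a x = - a (D (R x) x)"
proof -
  have ac: "a \<in> compact_ops" and Qa: "Q a" using a by (auto simp: AA_compact AA_Q)
  have ba: "bounded_clinear a" by (rule compact_ops_bcl[OF ac])
  have bDa: "bounded_clinear (D a)" by (rule compact_ops_bcl[OF deriv_compact[OF D ac]])
  have "a \<circ> R x = (\<lambda>z. 0)"
    by (rule ext) (simp add: R_def bcl_scaleC[OF ba] QD3[OF Qa x])
  then have "op_add (D a \<circ> R x) (a \<circ> D (R x)) = (\<lambda>z. 0)"
    using deriv_leib[OF D ac R_compact[of x]] deriv_zero[OF D] by simp
  then have "op_add (D a \<circ> R x) (a \<circ> D (R x)) x = 0" by (rule fun_cong[where x=x, THEN trans]) simp
  then have "D a (R x x) + a (D (R x) x) = 0" unfolding op_add_def by simp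
  then show ?thesis unfolding R_def by (simp add: bcl_scaleC[OF bDa] eq_neg_iff_add_eq_0)
qed

lemma B1:
  assumes W2: "weak_2_local_derivation_K \<Delta>" and a: "a \<in> AA" and m: "m \<in> I" and n: "n \<in> I"
  shows "1 * cinner (e n) (\<Delta> a (e m)) = (lam m a - lam n a) * cinner (e n) (\<Delta> (P m) (e m))"
proof (rule transfer[OF W2 AA_compact[OF a] P_compact])
  fix D :: "('h \<Rightarrow> 'h) \<Rightarrow> 'h \<Rightarrow> 'h" assume D: "derivation_K D"
  show "1 * cinner (e n) (D a (e m)) = (lam m a - lam n a) * cinner (e n) (D (P m) (e m))"
    unfolding D1[OF D a m] using QD2[OF AA_Q[OF a] n]
    by (simp add: cinner_diff_right cinner_scaleC_right algebra_simps)
qed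

lemma B2:
  assumes W2: "weak_2_local_derivation_K \<Delta>" and a: "a \<in> AA" and m: "m \<in> I" and y: "y \<in> W"
  shows "1 * cinner y (\<Delta> a (e m)) = lam m a * cinner y (\<Delta> (P m) (e m))"
proof (rule transfer[OF W2 AA_compact[OF a] P_compact])
  fix D :: "('h \<Rightarrow> 'h) \<Rightarrow> 'h \<Rightarrow> 'h" assume D: "derivation_K D"
  show "1 * cinner y (D a (e m)) = lam m a * cinner y (D (P m) (e m))"
    unfolding D1[OF D a m] using QD4[OF AA_Q[OF a] y]
    by (simp add: cinner_diff_right cinner_scaleC_right)
qed

lemma B3:
  assumes W2: "weak_2_local_derivation_K \<Delta>" and a: "a \<in> AA" and x: "x \<in> W" and n: "n \<in> I"
  shows "cinner x x * cinner (e n) (\<Delta> a x) = - lam n a * cinner (e n) (\<Delta> (R x) x)"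
proof (rule transfer[OF W2 AA_compact[OF a] R_compact])
  fix D :: "('h \<Rightarrow> 'h) \<Rightarrow> 'h \<Rightarrow> 'h" assume D: "derivation_K D"
  have "cinner x x * cinner (e n) (D a x) = cinner (e n) (cinner x x *\<^sub>C D a x)"
    by (simp add: cinner_scaleC_right)
  also have "\<dots> = - lam n a * cinner (e n) (D (R x) x)"
    unfolding D2[OF D a x] using QD2[OF AA_Q[OF a] n] by (simp add: cinner_minus_right)
  finally show "cinner x x * cinner (e n) (D a x) = - lam n a * cinner (e n) (D (R x) x)" .
qed

lemma B4:
  assumes W2: "weak_2_local_derivation_K \<Delta>" and a: "a \<in> AA" and x: "x \<in> W" and y: "y \<in> W"
  shows "cinner x x * cinner y (\<Delta> a x) = 0 * cinner y (\<Delta> (R x) x)"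
proof (rule transfer[OF W2 AA_compact[OF a] R_compact])
  fix D :: "('h \<Rightarrow> 'h) \<Rightarrow> 'h \<Rightarrow> 'h" assume D: "derivation_K D"
  have "cinner x x * cinner y (D a x) = cinner y (cinner x x *\<^sub>C D a x)"
    by (simp add: cinner_scaleC_right)
  also have "\<dots> = 0"
    unfolding D2[OF D a x] using QD4[OF AA_Q[OF a] y] by (simp add: cinner_minus_right)
  finally show "cinner x x * cinner y (D a x) = 0 * cinner y (D (R x) x)" by simp
qed

end



context onfam begin

lemma main_add:
  assumes W2: "weak_2_local_derivation_K \<Delta>" and a: "a \<in> AA" and b: "b \<in> AA"
  shows "\<Delta> (op_add a b) = op_add (\<Delta> a) (\<Delta> b)"
proof -
  define s where "s = op_add a b"
  have s: "s \<in> AA" using AA_cstar a b unfolding cstar_subalgebra_def s_def by blast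
  have bcl: "bounded_clinear (\<Delta> t)" if "t \<in> AA" for t
    using W2 AA_compact[OF that] compact_ops_bcl unfolding weak_2_local_derivation_K_def by blast
  have bs: "bounded_clinear (\<Delta> s)" and ba: "bounded_clinear (\<Delta> a)" and bb: "bounded_clinear (\<Delta> b)"
    using bcl s a b by auto
  have ls: "lam n s = lam n a + lam n b" for n unfolding s_def lam_def op_add_def by (simp add: cinner_add_right)
  define F where "F x y = cinner y (\<Delta> s x) - cinner y (\<Delta> a x) - cinner y (\<Delta> b x)" for x y
  have Fadd1: "F (u + v) y = F u y + F v y" for u v y
    unfolding F_def by (simp add: bcl_add[OF bs] bcl_add[OF ba] bcl_add[OF bb] cinner_add_right)
  have Fsc1: "F (c *\<^sub>C u) y = c * F u y" for c u y
    unfolding F_def by (simp add: bcl_scaleC[OF bs] bcl_scaleC[OF ba] bcl_scaleC[OF bb] cinner_scaleC_right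
        algebra_simps)
  have F0: "F 0 y = 0" for y unfolding F_def by (simp add: bcl_zero[OF bs] bcl_zero[OF ba] bcl_zero[OF bb])
  have Fadd2: "F x (u + v) = F x u + F x v" for x u v
    unfolding F_def by (simp add: cinner_add_left)
  have Fsc2: "F x (c *\<^sub>C u) = cnj c * F x u" for c u x
    unfolding F_def by (simp add: cinner_scaleC_left algebra_simps)
  have Fc1: "(\<lambda>k. F (X k) y) \<longlonglongrightarrow> F l y" if X: "X \<longlonglongrightarrow> l" for X l y
    unfolding F_def
    by (intro tendsto_diff tendsto_cinner_right bcl_cont[OF bs X] bcl_cont[OF ba X] bcl_cont[OF bb X])
  have Fc2: "(\<lambda>k. F x (X k)) \<longlonglongrightarrow> F x l" if X: "X \<longlonglongrightarrow> l" for X l x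
    unfolding F_def by (intro tendsto_diff tendsto_cinner_left X)
  have blk_e: "F (e m) y = 0" if m: "m \<in> I" and y: "y \<in> W \<or> (\<exists>n\<in>I. y = e n)" for m y
  proof (cases "y \<in> W")
    case True
    define K where "K = cinner y (\<Delta> (P m) (e m))"
    have h: "cinner y (\<Delta> t (e m)) = lam m t * K" if "t \<in> AA" for t
      using B2[OF W2 that m True] unfolding K_def by simp
    have "F (e m) y = lam m s * K - lam m a * K - lam m b * K"
      unfolding F_def by (simp only: h[OF s] h[OF a] h[OF b])
    also have "\<dots> = 0" unfolding ls by (simp add: algebra_simps)
    finally show ?thesis .
  next
    case False
    then obtain n where n: "n \<in> I" "y = e n" using y by blast
    define K where "K = cinner (e n) (\<Delta> (P m) (e m))"
    have h: "cinner (e n) (\<Delta> t (e m)) = (lam m t - lam n t) * K" if "t \<in> AA" for t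
      using B1[OF W2 that m n(1)] unfolding K_def by simp
    have "F (e m) y = (lam m s - lam n s) * K - (lam m a - lam n a) * K - (lam m b - lam n b) * K"
      unfolding F_def n(2) by (simp only: h[OF s] h[OF a] h[OF b])
    also have "\<dots> = 0" unfolding ls by (simp add: algebra_simps)
    finally show ?thesis .
  qed
  have blk_W: "F x y = 0" if x: "x \<in> W" and y: "y \<in> W \<or> (\<exists>n\<in>I. y = e n)" for x y
  proof (cases "x = 0")
    case True then show ?thesis by (simp add: F0)
  next
    case False
    then have xx: "cinner x x \<noteq> 0" by simp
    have "cinner x x * F x y = 0"
    proof (cases "y \<in> W")
      case True
      have h: "cinner x x * cinner y (\<Delta> t x) = 0" if "t \<in> AA" for t
        using B4[OF W2 that x True] by simp
      have "cinner x x * F x y = cinner x x * cinner y (\<Delta> s x) - cinner x x * cinner y (\<Delta> a x)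
          - cinner x x * cinner y (\<Delta> b x)" unfolding F_def by (simp add: algebra_simps)
      also have "\<dots> = 0" by (simp only: h[OF s] h[OF a] h[OF b]) simp
      finally show ?thesis .
    next
      case False
      then obtain n where n: "n \<in> I" "y = e n" using y by blast
      define K where "K = cinner (e n) (\<Delta> (R x) x)"
      have h: "cinner x x * cinner (e n) (\<Delta> t x) = - lam n t * K" if "t \<in> AA" for t
        using B3[OF W2 that x n(1)] unfolding K_def by simp
      have "cinner x x * F x y = cinner x x * cinner (e n) (\<Delta> s x) - cinner x x * cinner (e n) (\<Delta> a x)
          - cinner x x * cinner (e n) (\<Delta> b x)" unfolding F_def n(2) by (simp add: algebra_simps)
      also have "\<dots> = - lam n s * K - - lam n a * K - - lam n b * K"
        by (simp only: h[OF s] h[OF a] h[OF b])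
      also have "\<dots> = 0" unfolding ls by (simp add: algebra_simps)
      finally show ?thesis .
    qed
    then show ?thesis using xx by simp
  qed
  have step1: "F x y = 0" if y: "y \<in> W \<or> (\<exists>n\<in>I. y = e n)" for x y
  proof (rule vanish[where f="\<lambda>x. F x y"])
    show "F (u + v) y = F u y + F v y" for u v by (rule Fadd1)
    show "F (c *\<^sub>C e n) y = 0" if "n \<in> I" for c n using Fsc1 blk_e[OF that y] by simp
    show "F w y = 0" if "w \<in> W" for w using blk_W[OF that y] .
    show "(\<lambda>k. F (X k) y) \<longlonglongrightarrow> F l y" if "X \<longlonglongrightarrow> l" for X l using Fc1[OF that] .
  qed
  have step2: "F x y = 0" for x y
  proof (rule vanish[where f="\<lambda>y. F x y"])
    show "F x (u + v) = F x u + F x v" for u v by (rule Fadd2)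
    show "F x (c *\<^sub>C e n) = 0" if "n \<in> I" for c n using Fsc2 step1[of "e n" x] that by auto
    show "F x w = 0" if "w \<in> W" for w using step1[of w x] that by auto
    show "(\<lambda>k. F x (X k)) \<longlonglongrightarrow> F x l" if "X \<longlonglongrightarrow> l" for X l using Fc2[OF that] .
  qed
  show ?thesis unfolding s_def[symmetric]
  proof (rule ext)
    fix z
    define u where "u = \<Delta> s z - \<Delta> a z - \<Delta> b z"
    have "cinner u u = F z u" unfolding F_def u_def by (simp add: cinner_diff_right)
    then have "u = 0" using step2 by simp
    then show "\<Delta> s z = op_add (\<Delta> a) (\<Delta> b) z" unfolding u_def op_add_def by (simp add: algebra_simps)
  qed
qed

end

theorem proposition3p5:
  fixes \<Delta> :: "('h::chilbert_space \<Rightarrow> 'h) \<Rightarrow> ('h \<Rightarrow> 'h)"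
    and p :: "nat \<Rightarrow> ('h \<Rightarrow> 'h)"
    and I :: "nat set"
  assumes "weak_2_local_derivation_K \<Delta>"
    and "\<And>n. n \<in> I \<Longrightarrow> minimal_projection (p n)"
    and "\<And>n m. n \<in> I \<Longrightarrow> m \<in> I \<Longrightarrow> n \<noteq> m \<Longrightarrow> p n \<circ> p m = (\<lambda>x. 0)"
  shows "\<forall>a \<in> generated_cstar (p ` I). \<forall>b \<in> generated_cstar (p ` I).
           \<Delta> (op_add a b) = op_add (\<Delta> a) (\<Delta> b)"
proof -
  have "\<forall>n\<in>I. \<exists>v. norm v = 1 \<and> p n = (\<lambda>z. cinner v z *\<^sub>C v)"
    using minproj_rank1 assms(2) by blast
  then obtain e where e: "\<And>n. n \<in> I \<Longrightarrow> norm (e n) = 1 \<and> p n = (\<lambda>z. cinner (e n) z *\<^sub>C e n)"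
    by metis
  interpret onfam e I
  proof
    show "norm (e n) = 1" if "n \<in> I" for n using e[OF that] by blast
    show "cinner (e n) (e m) = 0" if "n \<in> I" "m \<in> I" "n \<noteq> m" for n m
      using rank1_orth[of "e n" "e m"] e[OF that(1)] e[OF that(2)] assms(3)[OF that] by auto
  qed
  have "p ` I \<subseteq> AA" using e rank1_AA by auto
  then have "generated_cstar (p ` I) \<subseteq> AA"
    unfolding generated_cstar_def using AA_cstar by blast
  then show ?thesis using main_add[OF assms(1)] by blast
qed



end
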